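(* Let $a>0$, $y_1\in\mathbb{R}$, $\alpha\in(0,\frac{\pi}{2})$ and let $f:\Omega\to\mathbb{C}$ be holomorphic on an open set $\Omega\subseteq\mathbb{C}$ containing $S^+_\alpha$. Then: (i) If $|f(z)|\le Ae^{B|z|}$ for all $z\in S^+_\alpha$ and some $A,B\ge0$, then for every $y_0\in\mathbb{R}$ $$\lim_{\varepsilon\to0^+}\int_0^\infty e^{-\varepsilon(y-y_0)^2}e^{ia(y-y_1)^2}f(y)\,dy=e^{i\alpha}\int_0^\infty e^{ia(ye^{i\alpha}-y_1)^2}f(ye^{i\alpha})\,dy,$$ where both integrands are absolutely integrable on $(0,\infty)$. (ii) If $|f(z)|\le Ae^{B\,\mathrm{Im}(z)}$ for all $z\in S^+_\alpha$ and some $A,B\ge0$, then $$\lim_{R\to\infty}\int_0^R e^{ia(y-y_1)^2}f(y)\,dy=e^{i\alpha}\int_0^\infty e^{ia(ye^{i\alpha}-y_1)^2}f(ye^{i\alpha})\,dy,$$ where the integrand on the right is absolutely integrable on $(0,\infty)$ and the one on the left is absolutely integrable on $(0,R)$ for each $R>0$.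
   Context: For $\alpha\in(0,\frac{\pi}{2})$, $S^+_\alpha:=\{z\in\mathbb{C}: z=0 \text{ or } 0\le \mathrm{Arg}(z)\le\alpha\}$ (closed sector). *)

theory Defs
  imports "HOL-Complex_Analysis.Complex_Analysis"
begin

definition sector_plus :: "real \<Rightarrow> complex set" where
  "sector_plus \<alpha> = {z. z = 0 \<or> (0 \<le> Arg z \<and> Arg z \<le> \<alpha>)}"

end

theory Submission
  imports Defs "HOL-Real_Asymp.Real_Asymp"
begin


lemma sector_mem:
  assumes "0 < \<alpha>" "\<alpha> < pi/2" "0 \<le> Im z" "Im z \<le> tan \<alpha> * Re z"
  shows "z \<in> sector_plus \<alpha>"
proof (cases "z = 0")
  case True then show ?thesis by (simp add: sector_plus_def)
next
  case False
  have ta: "tan \<alpha> > 0" using assms by (simp add: tan_gt_zero)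
  have re: "Re z > 0"
  proof (rule ccontr)
    assume "\<not> Re z > 0"
    then have "tan \<alpha> * Re z \<le> 0" using ta by (simp add: mult_nonneg_nonpos)
    then have "Im z = 0" using assms by linarith
    moreover have "Re z \<noteq> 0" using False \<open>Im z = 0\<close> complex_eq_iff by auto
    ultimately show False using assms \<open>\<not> Re z > 0\<close> ta
      by (smt (verit) mult_pos_neg)
  qed
  define t where "t = Arg z"
  have c: "cmod z * cos t = Re z" and s: "cmod z * sin t = Im z"
    using Arg_eq [OF False] unfolding t_def by (metis Re_exp exp_Ln norm_exp_eq_Re Arg_def False,
        metis Im_exp exp_Ln norm_exp_eq_Re Arg_def False)
  have nz: "cmod z > 0" using False by simp
  have t0: "0 \<le> t" using assms(3) by (simp add: t_def Arg_less_0)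
  have cpos: "cos t > 0" using c re nz by (metis zero_less_mult_pos)
  have tpi: "t < pi/2"
  proof (rule ccontr)
    assume "\<not> t < pi/2"
    moreover have "t \<le> pi" using Arg_le_pi t_def by simp
    ultimately have "cos (pi - t) \<ge> 0" by (intro cos_ge_zero) auto
    then have "cos t \<le> 0" by (simp add: cos_diff)
    then show False using cpos by simp
  qed
  have "tan t = Im z / Re z" unfolding tan_def using c s nz by (metis mult_divide_mult_cancel_left_if norm_eq_zero False)
  also have "\<dots> \<le> tan \<alpha>" using assms re by (simp add: divide_le_eq)
  finally have "t \<le> \<alpha>" using tan_mono_le_eq[of t \<alpha>] t0 tpi assms by simp
  then show ?thesis using t0 by (simp add: sector_plus_def t_def)
qed



lemma lp_param:
  fixes g :: "complex \<Rightarrow> complex" and a d :: complex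
  assumes T: "T > 0"
  shows "(g has_contour_integral I) (linepath a (a + of_real T * d)) \<longleftrightarrow>
         ((\<lambda>t. g (a + of_real t * d) * d) has_integral I) {0..T}"
proof -
  let ?h = "\<lambda>t. g (a + of_real t * d) * d"
  have 1: "((\<lambda>x. ?h (T *\<^sub>R x + 0)) has_integral (I /\<^sub>R T ^ DIM(real))) (cbox ((0 - 0) /\<^sub>R T) ((T - 0) /\<^sub>R T))
        \<longleftrightarrow> (?h has_integral I) (cbox 0 T)"
    by (rule has_integral_affinity_iff[OF T])
  have eq: "(\<lambda>x. g (linepath a (a + of_real T * d) x) * (a + of_real T * d - a)) = (\<lambda>x. T *\<^sub>R ?h (T * x))"
    by (auto simp: linepath_def scaleR_conv_of_real algebra_simps fun_eq_iff)
  have "(g has_contour_integral I) (linepath a (a + of_real T * d)) \<longleftrightarrow>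
        ((\<lambda>x. T *\<^sub>R ?h (T * x)) has_integral I) {0..1}"
    unfolding has_contour_integral_linepath eq ..
  also have "\<dots> \<longleftrightarrow> ((\<lambda>x. ?h (T * x)) has_integral I /\<^sub>R T) {0..1}"
    using T by (intro has_integral_cmul_iff') auto
  also have "\<dots> \<longleftrightarrow> (?h has_integral I) {0..T}"
    using 1 T by simp
  finally show ?thesis .
qed



lemma core:
  fixes g :: "complex \<Rightarrow> complex"
  assumes al: "0 < \<alpha>" "\<alpha> < pi/2" and hol: "g holomorphic_on sector_plus \<alpha>" and R: "R > 0"
  shows "integral {0..R} (\<lambda>x. g (of_real x)) =
     exp (\<i> * of_real \<alpha>) * integral {0..R / cos \<alpha>} (\<lambda>y. g (of_real y * exp (\<i> * of_real \<alpha>)))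
     - \<i> * integral {0..R * tan \<alpha>} (\<lambda>t. g (of_real R + of_real t * \<i>))"
proof -
  define T where "T = R * tan \<alpha>"
  define L where "L = R / cos \<alpha>"
  define c where "c = exp (\<i> * of_real \<alpha>)"
  define P where "P = of_real R + of_real T * \<i>"
  have cpos: "cos \<alpha> > 0" using al by (intro cos_gt_zero_pi) auto
  have tpos: "tan \<alpha> > 0" using al by (simp add: tan_gt_zero)
  have Tpos: "T > 0" using R tpos by (simp add: T_def)
  have Lpos: "L > 0" using R cpos by (simp add: L_def)
  have P2: "P = 0 + of_real L * c"
    using cpos by (simp add: P_def L_def T_def c_def complex_eq_iff tan_def Re_exp Im_exp)
  define K where "K = {z. 0 \<le> Im z \<and> Im z \<le> tan \<alpha> * Re z}"
  have convK: "convex K"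
    unfolding convex_def K_def
  proof (intro ballI allI impI conjI, goal_cases)
    case (1 x y u v)
    then have "u * Im x \<le> u * (tan \<alpha> * Re x)" "v * Im y \<le> v * (tan \<alpha> * Re y)"
      by (auto intro: mult_left_mono)
    moreover have "Im (u *\<^sub>R x + v *\<^sub>R y) = u * Im x + v * Im y"
      "Re (u *\<^sub>R x + v *\<^sub>R y) = u * Re x + v * Re y" by simp_all
    moreover have "0 \<le> u * Im x + v * Im y" using 1 by simp
    moreover have "tan \<alpha> * (u * Re x + v * Re y) = u * (tan \<alpha> * Re x) + v * (tan \<alpha> * Re y)"
      by (simp add: algebra_simps)
    ultimately show ?case by (simp only: mem_Collect_eq) (simp add: add_mono)
  qed
  have KS: "K \<subseteq> sector_plus \<alpha>" using sector_mem al unfolding K_def by blast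
  have hullK: "convex hull {0, of_real R, P} \<subseteq> K"
    by (rule hull_minimal) (use convK R Tpos tpos in \<open>auto simp: K_def P_def T_def\<close>)
  have holH: "g holomorphic_on convex hull {0, of_real R, P}"
    using hol hullK KS holomorphic_on_subset by blast
  have contH: "continuous_on (convex hull {0, of_real R, P}) g"
    using holH holomorphic_on_imp_continuous_on by blast
  have "contour_integral (linepath 0 (of_real R)) g + contour_integral (linepath (of_real R) P) g
         + contour_integral (linepath P 0) g = 0"
    by (rule has_chain_integral_chain_integral3[OF Cauchy_theorem_triangle[OF holH]])
  moreover have "contour_integral (linepath 0 (of_real R)) g = integral {0..R} (\<lambda>x. g (of_real x))"
    using contour_integral_linepath_Reals_eq[of 0 "of_real R" g] R by simp
  moreover have "contour_integral (linepath (of_real R) P) g = integral {0..T} (\<lambda>t. g (of_real R + of_real t * \<i>)) * \<i>"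
  proof -
    have "continuous_on (closed_segment (of_real R) P) g"
      by (rule continuous_on_subset[OF contH]) (auto simp: segment_convex_hull intro!: hull_mono)
    then have "(g has_contour_integral contour_integral (linepath (of_real R) P) g) (linepath (of_real R) P)"
      by (intro has_contour_integral_integral contour_integrable_continuous_linepath)
    then have "((\<lambda>t. g (of_real R + of_real t * \<i>) * \<i>) has_integral contour_integral (linepath (of_real R) P) g) {0..T}"
      using lp_param[OF Tpos] unfolding P_def by blast
    then have "((\<lambda>t. g (of_real R + of_real t * \<i>) * \<i>) has_integral contour_integral (linepath (of_real R) P) g) {0..T}" .
    then have "contour_integral (linepath (of_real R) P) g = integral {0..T} (\<lambda>t. g (of_real R + of_real t * \<i>) * \<i>)"
      by (rule integral_unique[symmetric])
    then show ?thesis by simp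
  qed
  moreover have "contour_integral (linepath P 0) g = - (integral {0..L} (\<lambda>y. g (of_real y * c)) * c)"
  proof -
    have "continuous_on (closed_segment 0 P) g"
      by (rule continuous_on_subset[OF contH]) (auto simp: segment_convex_hull intro!: hull_mono)
    then have "(g has_contour_integral contour_integral (linepath 0 P) g) (linepath 0 P)"
      by (intro has_contour_integral_integral contour_integrable_continuous_linepath)
    then have "((\<lambda>t. g (0 + of_real t * c) * c) has_integral contour_integral (linepath 0 P) g) {0..L}"
      using lp_param[OF Lpos] unfolding P2 by blast
    then have "((\<lambda>t. g (of_real t * c) * c) has_integral contour_integral (linepath 0 P) g) {0..L}"
      by simp
    then have "contour_integral (linepath 0 P) g = integral {0..L} (\<lambda>t. g (of_real t * c) * c)"
      by (rule integral_unique[symmetric])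
    then have "contour_integral (linepath 0 P) g = integral {0..L} (\<lambda>y. g (of_real y * c)) * c"
      by simp
    moreover have "contour_integral (linepath P 0) g = - contour_integral (linepath 0 P) g"
      by (metis contour_integral_reversepath reversepath_linepath valid_path_linepath)
    ultimately show ?thesis by simp
  qed
  ultimately show ?thesis unfolding c_def[symmetric] L_def[symmetric] T_def[symmetric]
    by (simp add: algebra_simps)
qed



lemma gauss_dom:
  fixes k m :: real
  assumes "k > 0"
  shows "\<exists>C>0. \<forall>y. exp (- k * y^2 + m * y) \<le> C * exp (- y)"
proof (intro exI conjI allI)
  show "exp ((m+1)^2 / (4*k)) > 0" by simp
  fix y :: real
  have "0 \<le> (2*k*y - (m+1))^2 / (4*k)" using assms by simp
  moreover have "- k * y^2 + m * y = (m+1)^2 / (4*k) + (- y) - (2*k*y - (m+1))^2 / (4*k)"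
    using assms by (simp add: field_simps power2_eq_square)
  ultimately have "- k * y^2 + m * y \<le> (m+1)^2 / (4*k) + (- y)" by linarith
  then have "exp (- k * y^2 + m * y) \<le> exp ((m+1)^2 / (4*k) + (- y))" by (simp only: exp_le_cancel_iff)
  also have "\<dots> = exp ((m+1)^2 / (4*k)) * exp (- y)" by (rule exp_add)
  finally show "exp (- k * y^2 + m * y) \<le> exp ((m+1)^2 / (4*k)) * exp (- y)" .
qed

lemma exp_minus_int: "(\<lambda>y::real. C * exp (- y)) integrable_on {0..}"
proof -
  have "(\<lambda>x. exp (- 1 * x) :: real) integrable_on {0..}"
    by (rule integrable_on_exp_minus_to_infinity) simp
  then show ?thesis by (intro integrable_on_mult_right) simp
qed

lemma exp_seg_bound:
  fixes \<kappa> T :: real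
  assumes "\<kappa> > 0" "T \<ge> 0"
  shows "(\<lambda>t. M * exp (- \<kappa> * t)) integrable_on {0..T}"
        "integral {0..T} (\<lambda>t. M * exp (- \<kappa> * t)) = M * ((1 - exp (- \<kappa> * T)) / \<kappa>)"
proof -
  have "((\<lambda>t. exp (- \<kappa> * t)) has_integral ((- exp (- \<kappa> * T) / \<kappa>) - (- exp (- \<kappa> * 0) / \<kappa>))) {0..T}"
    apply (rule fundamental_theorem_of_calculus[OF assms(2)])
    using assms(1)
    by (auto intro!: derivative_eq_intros simp: has_real_derivative_iff_has_vector_derivative[symmetric])
  then have h: "((\<lambda>t. exp (- \<kappa> * t)) has_integral ((1 - exp (- \<kappa> * T)) / \<kappa>)) {0..T}"
    by (simp add: diff_divide_distrib)
  show "(\<lambda>t. M * exp (- \<kappa> * t)) integrable_on {0..T}"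
    using h by (intro integrable_on_mult_right) (auto simp: integrable_on_def)
  show "integral {0..T} (\<lambda>t. M * exp (- \<kappa> * t)) = M * ((1 - exp (- \<kappa> * T)) / \<kappa>)"
    using h by (simp add: integral_unique)
qed

lemma vert_bound:
  fixes h :: "real \<Rightarrow> complex"
  assumes "continuous_on {0..T} h" "\<kappa> > 0" "T \<ge> 0" "M \<ge> 0"
    and "\<And>t. t \<in> {0..T} \<Longrightarrow> norm (h t) \<le> M * exp (- \<kappa> * t)"
  shows "norm (integral {0..T} h) \<le> M / \<kappa>"
proof -
  have "norm (integral {0..T} h) \<le> integral {0..T} (\<lambda>t. M * exp (- \<kappa> * t))"
    by (rule integral_norm_bound_integral)
       (use assms exp_seg_bound(1)[OF assms(2,3)] integrable_continuous_interval in auto)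
  also have "\<dots> = M * ((1 - exp (- \<kappa> * T)) / \<kappa>)" by (rule exp_seg_bound(2)[OF assms(2,3)])
  also have "\<dots> \<le> M * (1 / \<kappa>)"
    using assms by (intro mult_left_mono divide_right_mono) auto
  finally show ?thesis by simp
qed

lemma lim_top:
  fixes h :: "real \<Rightarrow> complex"
  assumes "h absolutely_integrable_on {0..}"
  shows "((\<lambda>L. integral {0..L} h) \<longlongrightarrow> integral {0..} h) at_top"
proof -
  have sub: "h absolutely_integrable_on {0..L}" for L :: real
    by (rule set_integrable_subset[OF assms]) auto
  have "((\<lambda>b. set_lebesgue_integral lebesgue {0..b} h) \<longlongrightarrow> set_lebesgue_integral lebesgue {0..} h) at_top"
    by (rule tendsto_set_lebesgue_integral_at_top[OF _ assms]) auto
  then show ?thesis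
    using set_lebesgue_integral_eq_integral(2)[OF sub] set_lebesgue_integral_eq_integral(2)[OF assms]
    by simp
qed

lemma int_Ioi:
  fixes h :: "real \<Rightarrow> complex"
  shows "integral {0<..} h = integral {0..} h"
  by (rule integral_spike_set) (auto intro: negligible_subset[of "{0}"])

lemma abs_Ioi:
  fixes h :: "real \<Rightarrow> complex"
  assumes "h absolutely_integrable_on {0..}"
  shows "h absolutely_integrable_on {0<..}"
  by (rule set_integrable_subset[OF assms]) auto




lemma norm_qexp: "norm (exp (\<i> * of_real a * (z - of_real y1)^2)) = exp (- 2*a*(Re z - y1) * Im z)"
  by (simp add: norm_exp_eq_Re power2_eq_square algebra_simps)

lemma norm_gexp: "norm (exp (- of_real e * (z - of_real y0)^2)) = exp (- e * ((Re z - y0)^2 - (Im z)^2))"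
  by (simp add: norm_exp_eq_Re power2_eq_square algebra_simps)

lemma ray_Re: "Re (of_real y * exp (\<i> * of_real \<alpha>)) = y * cos \<alpha>"
  and ray_Im: "Im (of_real y * exp (\<i> * of_real \<alpha>)) = y * sin \<alpha>"
  by (simp_all add: Re_exp Im_exp)

lemma ray_norm: "norm (of_real y * exp (\<i> * of_real \<alpha>)) = \<bar>y\<bar>"
  by (simp add: norm_mult)

lemma ray_in: assumes "0 < \<alpha>" "\<alpha> < pi/2" "y \<ge> 0"
  shows "of_real y * exp (\<i> * of_real \<alpha>) \<in> sector_plus \<alpha>"
proof (rule sector_mem[OF assms(1,2)])
  have "sin \<alpha> \<ge> 0" using assms by (intro sin_ge_zero) auto
  then show "0 \<le> Im (of_real y * exp (\<i> * of_real \<alpha>))" unfolding ray_Im using assms by simp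
  have "cos \<alpha> > 0" using assms by (intro cos_gt_zero_pi) auto
  then show "Im (of_real y * exp (\<i> * of_real \<alpha>)) \<le> tan \<alpha> * Re (of_real y * exp (\<i> * of_real \<alpha>))"
    unfolding ray_Im ray_Re by (simp add: tan_def)
qed

lemma real_in: assumes "y \<ge> 0" "0 \<le> \<alpha>" shows "(of_real y :: complex) \<in> sector_plus \<alpha>"
  using assms by (simp add: sector_plus_def)

lemma vert_in: assumes "0 < \<alpha>" "\<alpha> < pi/2" "0 \<le> t" "t \<le> R * tan \<alpha>"
  shows "of_real R + of_real t * \<i> \<in> sector_plus \<alpha>"
  by (rule sector_mem[OF assms(1,2)]) (use assms in \<open>simp_all add: mult.commute\<close>)




lemma ray_dom:
  fixes f :: "complex \<Rightarrow> complex"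
  assumes a: "a > 0" and al: "0 < \<alpha>" "\<alpha> < pi/2" and A: "A \<ge> 0"
    and fb: "\<And>y. y \<ge> 0 \<Longrightarrow> norm (f (of_real y * exp (\<i> * of_real \<alpha>))) \<le> A * exp (B * y)"
  obtains D where "D integrable_on {0..}"
    "\<And>e y. 0 \<le> e \<Longrightarrow> e \<le> a * cos \<alpha> / sin \<alpha> \<Longrightarrow> 0 \<le> y \<Longrightarrow>
       norm (exp (- of_real e * (of_real y * exp (\<i> * of_real \<alpha>) - of_real y0)^2) *
        (exp (\<i> * of_real a * (of_real y * exp (\<i> * of_real \<alpha>) - of_real y1)^2) *
         f (of_real y * exp (\<i> * of_real \<alpha>)))) \<le> D y"
proof -
  define s where "s = sin \<alpha>"
  define co where "co = cos \<alpha>"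
  have s: "s > 0" unfolding s_def using al by (intro sin_gt_zero) auto
  have co: "co > 0" unfolding co_def using al by (intro cos_gt_zero_pi) auto
  define k where "k = a * co * s"
  define m where "m = 2 * a * y1 * s + B"
  have k: "k > 0" using a s co by (simp add: k_def)
  obtain C where C: "C > 0" "\<And>y. exp (- k * y^2 + m * y) \<le> C * exp (- y)"
    using gauss_dom[OF k, of m] by blast
  define D where "D = (\<lambda>y::real. (A * C) * exp (- y))"
  have "D integrable_on {0..}" unfolding D_def by (rule exp_minus_int)
  moreover
  have "norm (exp (- of_real e * (of_real y * exp (\<i> * of_real \<alpha>) - of_real y0)^2) *
        (exp (\<i> * of_real a * (of_real y * exp (\<i> * of_real \<alpha>) - of_real y1)^2) *
         f (of_real y * exp (\<i> * of_real \<alpha>)))) \<le> D y"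
    if e: "0 \<le> e" "e \<le> a * cos \<alpha> / sin \<alpha>" and y: "0 \<le> y" for e y
  proof -
    let ?z = "of_real y * exp (\<i> * of_real \<alpha>)"
    define E where "E = - e * ((y * co - y0)^2 - (y * s)^2) - 2 * a * (y * co - y1) * (y * s) + B * y"
    have n: "norm (exp (- of_real e * (?z - of_real y0)^2) * (exp (\<i> * of_real a * (?z - of_real y1)^2) * f ?z))
          = exp (- e * ((y * co - y0)^2 - (y * s)^2)) * (exp (- 2 * a * (y * co - y1) * (y * s)) * norm (f ?z))"
      by (simp only: norm_mult norm_gexp norm_qexp ray_Re ray_Im s_def co_def)
    also have "\<dots> \<le> exp (- e * ((y * co - y0)^2 - (y * s)^2)) * (exp (- 2 * a * (y * co - y1) * (y * s)) * (A * exp (B * y)))"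
      using fb[OF y] by (intro mult_left_mono) auto
    also have "\<dots> = A * exp E" by (simp add: E_def exp_add[symmetric] algebra_simps)
    also have "\<dots> \<le> A * exp (- k * y^2 + m * y)"
    proof -
      have es: "e * s^2 \<le> a * co * s"
      proof -
        have "e * s^2 \<le> (a * co / s) * s^2" using e s by (intro mult_right_mono) (auto simp: s_def co_def)
        also have "\<dots> = a * co * s" using s by (simp add: power2_eq_square field_simps)
        finally show ?thesis .
      qed
      have "E = - k * y^2 + m * y + (- e * (y * co - y0)^2 + (e * s^2 - a * co * s) * y^2)"
        by (simp add: E_def k_def m_def algebra_simps power2_eq_square)
      moreover have "e * (y * co - y0)^2 \<ge> 0" using e by simp
      moreover have "(e * s^2 - a * co * s) * y^2 \<le> 0" using es by (intro mult_nonpos_nonneg) auto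
      ultimately have "E \<le> - k * y^2 + m * y" by linarith
      then show ?thesis using A by (intro mult_left_mono) auto
    qed
    also have "\<dots> \<le> A * (C * exp (- y))" using C A by (intro mult_left_mono) auto
    finally show ?thesis by (simp add: D_def mult.assoc)
  qed
  ultimately show ?thesis using that by blast
qed




lemma L_id:
  fixes g :: "complex \<Rightarrow> complex"
  assumes al: "0 < \<alpha>" "\<alpha> < pi/2" and hol: "g holomorphic_on sector_plus \<alpha>"
    and ray: "(\<lambda>y. g (of_real y * exp (\<i> * of_real \<alpha>))) absolutely_integrable_on {0..}"
    and V: "((\<lambda>R. integral {0..R * tan \<alpha>} (\<lambda>t. g (of_real R + of_real t * \<i>))) \<longlongrightarrow> 0) at_top"
  shows "((\<lambda>R. integral {0..R} (\<lambda>x. g (of_real x))) \<longlongrightarrow>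
           exp (\<i> * of_real \<alpha>) * integral {0..} (\<lambda>y. g (of_real y * exp (\<i> * of_real \<alpha>)))) at_top"
proof -
  have cpos: "cos \<alpha> > 0" using al by (intro cos_gt_zero_pi) auto
  have filt: "filterlim (\<lambda>R. R / cos \<alpha>) at_top at_top"
    using cpos by real_asymp
  have lim1: "((\<lambda>R. integral {0..R / cos \<alpha>} (\<lambda>y. g (of_real y * exp (\<i> * of_real \<alpha>))))
      \<longlongrightarrow> integral {0..} (\<lambda>y. g (of_real y * exp (\<i> * of_real \<alpha>)))) at_top"
    by (rule filterlim_compose[OF lim_top[OF ray] filt])
  have "((\<lambda>R. exp (\<i> * of_real \<alpha>) * integral {0..R / cos \<alpha>} (\<lambda>y. g (of_real y * exp (\<i> * of_real \<alpha>)))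
       - \<i> * integral {0..R * tan \<alpha>} (\<lambda>t. g (of_real R + of_real t * \<i>)))
     \<longlongrightarrow> exp (\<i> * of_real \<alpha>) * integral {0..} (\<lambda>y. g (of_real y * exp (\<i> * of_real \<alpha>))) - \<i> * 0) at_top"
    by (intro tendsto_intros lim1 V)
  moreover have "eventually (\<lambda>R. exp (\<i> * of_real \<alpha>) * integral {0..R / cos \<alpha>} (\<lambda>y. g (of_real y * exp (\<i> * of_real \<alpha>)))
       - \<i> * integral {0..R * tan \<alpha>} (\<lambda>t. g (of_real R + of_real t * \<i>)) = integral {0..R} (\<lambda>x. g (of_real x))) at_top"
    using eventually_gt_at_top[of 0] by eventually_elim (simp add: core[OF al hol])
  ultimately show ?thesis by (simp add: Lim_transform_eventually)
qed




lemma part2: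
  fixes a y1 \<alpha> A B :: real and f :: "complex \<Rightarrow> complex"
  assumes a: "a > 0" and al: "0 < \<alpha>" "\<alpha> < pi / 2"
    and hol: "f holomorphic_on sector_plus \<alpha>" and A: "A \<ge> 0" and B: "B \<ge> 0"
    and bound: "\<forall>z\<in>sector_plus \<alpha>. norm (f z) \<le> A * exp (B * Im z)"
  shows "(\<forall>R>0. (\<lambda>y. exp (\<i> * of_real (a * (y - y1)^2)) * f (of_real y))
                  absolutely_integrable_on {0<..<R}) \<and>
       (\<lambda>y. exp (\<i> * of_real a * (of_real y * exp (\<i> * of_real \<alpha>) - of_real y1)^2) *
             f (of_real y * exp (\<i> * of_real \<alpha>))) absolutely_integrable_on {0<..} \<and>
       ((\<lambda>R. integral {0<..<R} (\<lambda>y. exp (\<i> * of_real (a * (y - y1)^2)) * f (of_real y)))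
          \<longlongrightarrow> exp (\<i> * of_real \<alpha>) *
              integral {0<..} (\<lambda>y. exp (\<i> * of_real a * (of_real y * exp (\<i> * of_real \<alpha>) - of_real y1)^2) *
                f (of_real y * exp (\<i> * of_real \<alpha>)))) at_top"
proof -
  define c where "c = exp (\<i> * of_real \<alpha>)"
  define G where "G = (\<lambda>z. exp (\<i> * of_real a * (z - of_real y1)^2) * f z)"
  have holG: "G holomorphic_on sector_plus \<alpha>"
    unfolding G_def by (intro holomorphic_intros hol)
  have contG: "continuous_on (sector_plus \<alpha>) G"
    using holG holomorphic_on_imp_continuous_on by blast
  have realeq: "(\<lambda>y. exp (\<i> * of_real (a * (y - y1)^2)) * f (of_real y)) = (\<lambda>y. G (of_real y))"
    by (simp add: G_def fun_eq_iff mult.assoc)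
  have rayeq: "(\<lambda>y. exp (\<i> * of_real a * (of_real y * c - of_real y1)^2) * f (of_real y * c)) = (\<lambda>y. G (of_real y * c))"
    by (simp add: G_def)
  have sin1: "sin \<alpha> \<le> 1" by simp
  have sin0: "sin \<alpha> \<ge> 0" using al by (intro sin_ge_zero) auto
  have tpos: "tan \<alpha> > 0" using al by (simp add: tan_gt_zero)
  have P1: "(\<lambda>y. G (of_real y)) absolutely_integrable_on {0<..<R}" if "R > 0" for R
  proof -
    have "continuous_on {0..R} (\<lambda>y. G (of_real y))"
      by (rule continuous_on_compose2[OF contG continuous_on_of_real]) (use al real_in in auto)
    then have "(\<lambda>y. G (of_real y)) absolutely_integrable_on {0..R}"
      by (rule absolutely_integrable_continuous_real)
    then show ?thesis by (rule set_integrable_subset) auto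
  qed
  have fb: "norm (f (of_real y * c)) \<le> A * exp (B * y)" if "y \<ge> 0" for y
  proof -
    have "norm (f (of_real y * c)) \<le> A * exp (B * Im (of_real y * c))"
      using bound ray_in[OF al that] unfolding c_def by blast
    also have "\<dots> \<le> A * exp (B * y)"
      using A B that sin1 sin0 unfolding c_def ray_Im
      by (intro mult_left_mono) (auto intro!: mult_left_mono mult_right_le_one_le)
    finally show ?thesis .
  qed
  obtain D where D: "D integrable_on {0..}"
    "\<And>e y. 0 \<le> e \<Longrightarrow> e \<le> a * cos \<alpha> / sin \<alpha> \<Longrightarrow> 0 \<le> y \<Longrightarrow>
       norm (exp (- of_real e * (of_real y * c - of_real 0)^2) *
        (exp (\<i> * of_real a * (of_real y * c - of_real y1)^2) * f (of_real y * c))) \<le> D y"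
    using ray_dom[OF a al A fb[unfolded c_def]] unfolding c_def by blast
  have cs: "0 \<le> a * cos \<alpha> / sin \<alpha>"
    using a al cos_gt_zero_pi[of \<alpha>] sin_gt_zero[of \<alpha>] by auto
  have rayint: "(\<lambda>y. G (of_real y * c)) absolutely_integrable_on {0..}"
  proof (rule measurable_bounded_by_integrable_imp_absolutely_integrable)
    have "continuous_on {0..} (\<lambda>y. G (of_real y * c))"
      by (rule continuous_on_compose2[OF contG]) (auto intro!: continuous_intros simp: c_def ray_in[OF al])
    then show "(\<lambda>y. G (of_real y * c)) \<in> borel_measurable (lebesgue_on {0..})"
      by (rule continuous_imp_measurable_on_sets_lebesgue) auto
    show "{0::real..} \<in> sets lebesgue" by auto
    show "D integrable_on {0..}" by (rule D)
    show "norm (G (of_real y * c)) \<le> D y" if "y \<in> {0..}" for y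
      using D(2)[OF order_refl cs, of y] that by (simp add: G_def)
  qed
  have V: "((\<lambda>R. integral {0..R * tan \<alpha>} (\<lambda>t. G (of_real R + of_real t * \<i>))) \<longlongrightarrow> 0) at_top"
  proof (rule Lim_null_comparison)
    show "((\<lambda>R. A / (2 * a * (R - y1) - B)) \<longlongrightarrow> 0) at_top" using a by real_asymp
    have ev1: "eventually (\<lambda>R. 2 * a * (R - y1) - B > 0) at_top" using a by real_asymp
    have ev: "eventually (\<lambda>R. 2 * a * (R - y1) - B > 0 \<and> R > 0) at_top"
      by (intro eventually_conj ev1 eventually_gt_at_top)
    show "eventually (\<lambda>R. norm (integral {0..R * tan \<alpha>} (\<lambda>t. G (of_real R + of_real t * \<i>)))
            \<le> A / (2 * a * (R - y1) - B)) at_top"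
      using ev
    proof eventually_elim
      case (elim R)
      define \<kappa> where "\<kappa> = 2 * a * (R - y1) - B"
      have k: "\<kappa> > 0" using elim by (simp add: \<kappa>_def)
      show ?case unfolding \<kappa>_def[symmetric]
      proof (rule vert_bound[OF _ k _ A])
        show "continuous_on {0..R * tan \<alpha>} (\<lambda>t. G (of_real R + of_real t * \<i>))"
          by (rule continuous_on_compose2[OF contG]) (auto intro!: continuous_intros vert_in[OF al])
        show "0 \<le> R * tan \<alpha>" using elim tpos by simp
        fix t assume t: "t \<in> {0..R * tan \<alpha>}"
        have "norm (G (of_real R + of_real t * \<i>)) = exp (- 2 * a * (R - y1) * t) * norm (f (of_real R + of_real t * \<i>))"
          unfolding G_def norm_mult norm_qexp by simp
        also have "\<dots> \<le> exp (- 2 * a * (R - y1) * t) * (A * exp (B * t))"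
          using bound vert_in[OF al, of t R] t by (intro mult_left_mono) auto
        also have "\<dots> = A * exp (- \<kappa> * t)"
          by (simp add: \<kappa>_def exp_add[symmetric] algebra_simps)
        finally show "norm (G (of_real R + of_real t * \<i>)) \<le> A * exp (- \<kappa> * t)" .
      qed
    qed
  qed
  have lim: "((\<lambda>R. integral {0..R} (\<lambda>x. G (of_real x))) \<longlongrightarrow> c * integral {0..} (\<lambda>y. G (of_real y * c))) at_top"
    using L_id[OF al holG rayint[unfolded c_def] V] unfolding c_def .
  show ?thesis
    unfolding realeq c_def[symmetric] rayeq
    using P1 abs_Ioi[OF rayint] lim
    by (simp add: int_Ioi integral_open_interval_real[symmetric])
qed




lemma part1:
  fixes a y1 \<alpha> A B :: real and f :: "complex \<Rightarrow> complex"
  assumes a: "a > 0" and al: "0 < \<alpha>" "\<alpha> < pi / 2"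
    and hol: "f holomorphic_on sector_plus \<alpha>" and A: "A \<ge> 0" and B: "B \<ge> 0"
    and bound: "\<forall>z\<in>sector_plus \<alpha>. norm (f z) \<le> A * exp (B * norm z)"
  shows "(\<forall>y0::real.
          (\<forall>\<epsilon>>0. (\<lambda>y. complex_of_real (exp (- \<epsilon> * (y - y0)^2)) *
                         exp (\<i> * of_real (a * (y - y1)^2)) * f (of_real y))
                     absolutely_integrable_on {0<..}) \<and>
          (\<lambda>y. exp (\<i> * of_real a * (of_real y * exp (\<i> * of_real \<alpha>) - of_real y1)^2) *
                f (of_real y * exp (\<i> * of_real \<alpha>))) absolutely_integrable_on {0<..} \<and>
          ((\<lambda>\<epsilon>. integral {0<..} (\<lambda>y. complex_of_real (exp (- \<epsilon> * (y - y0)^2)) *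
                         exp (\<i> * of_real (a * (y - y1)^2)) * f (of_real y)))
             \<longlongrightarrow> exp (\<i> * of_real \<alpha>) *
                 integral {0<..} (\<lambda>y. exp (\<i> * of_real a * (of_real y * exp (\<i> * of_real \<alpha>) - of_real y1)^2) *
                   f (of_real y * exp (\<i> * of_real \<alpha>)))) (at_right 0))"
proof
  fix y0 :: real
  define c where "c = exp (\<i> * of_real \<alpha>)"
  define G where "G = (\<lambda>z. exp (\<i> * of_real a * (z - of_real y1)^2) * f z)"
  define GE where "GE = (\<lambda>e z. exp (- of_real e * (z - of_real y0)^2) * G z)"
  have holG: "G holomorphic_on sector_plus \<alpha>"
    unfolding G_def by (intro holomorphic_intros hol)
  have holGE: "GE e holomorphic_on sector_plus \<alpha>" for e
    unfolding GE_def by (intro holomorphic_intros holG)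
  have contG: "continuous_on (sector_plus \<alpha>) G"
    using holG holomorphic_on_imp_continuous_on by blast
  have contGE: "continuous_on (sector_plus \<alpha>) (GE e)" for e
    using holGE holomorphic_on_imp_continuous_on by blast
  have realeq: "(\<lambda>y. complex_of_real (exp (- e * (y - y0)^2)) * exp (\<i> * of_real (a * (y - y1)^2)) * f (of_real y))
      = (\<lambda>y. GE e (of_real y))" for e
  proof -
    have "exp (- of_real e * (of_real y - of_real y0)^2) = complex_of_real (exp (- e * (y - y0)^2))" for y
    proof -
      have "exp (- of_real e * (of_real y - of_real y0)^2) = exp (complex_of_real (- e * (y - y0)^2))" by simp
      also have "\<dots> = complex_of_real (exp (- e * (y - y0)^2))" by (rule exp_of_real)
      finally show ?thesis .
    qed
    then show ?thesis by (simp add: GE_def G_def fun_eq_iff mult.assoc)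
  qed
  have rayeq: "(\<lambda>y. exp (\<i> * of_real a * (of_real y * c - of_real y1)^2) * f (of_real y * c)) = (\<lambda>y. G (of_real y * c))"
    by (simp add: G_def)
  have sin0: "sin \<alpha> > 0" using al by (intro sin_gt_zero) auto
  have cos0: "cos \<alpha> > 0" using al by (intro cos_gt_zero_pi) auto
  have tpos: "tan \<alpha> > 0" using al by (simp add: tan_gt_zero)
  define e0 where "e0 = a * cos \<alpha> / sin \<alpha>"
  have e0: "e0 > 0" using a sin0 cos0 by (simp add: e0_def)
  have e0tan: "e * tan \<alpha> \<le> a" if "0 \<le> e" "e \<le> e0" for e
  proof -
    have "e * tan \<alpha> \<le> e0 * tan \<alpha>" using that tpos by (intro mult_right_mono) auto
    also have "\<dots> = a" using sin0 cos0 by (simp add: e0_def tan_def)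
    finally show ?thesis .
  qed
  have realint: "(\<lambda>y. GE e (of_real y)) absolutely_integrable_on {0..}" if e: "e > 0" for e
  proof -
    obtain C where C: "C > 0" "\<And>y. exp (- e * y^2 + (2 * e * y0 + B) * y) \<le> C * exp (- y)"
      using gauss_dom[OF e, of "2 * e * y0 + B"] by blast
    show ?thesis
    proof (rule measurable_bounded_by_integrable_imp_absolutely_integrable)
      have "continuous_on {0..} (\<lambda>y. GE e (of_real y))"
        by (rule continuous_on_compose2[OF contGE continuous_on_of_real]) (use al real_in in auto)
      then show "(\<lambda>y. GE e (of_real y)) \<in> borel_measurable (lebesgue_on {0..})"
        by (rule continuous_imp_measurable_on_sets_lebesgue) auto
      show "{0::real..} \<in> sets lebesgue" by auto
      show "(\<lambda>y. (A * C) * exp (- y)) integrable_on {0..}" by (rule exp_minus_int)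
      show "norm (GE e (of_real y)) \<le> (A * C) * exp (- y)" if "y \<in> {0..}" for y
      proof -
        have y: "y \<ge> 0" using that by simp
        have "norm (GE e (of_real y)) = exp (- e * (y - y0)^2) * norm (f (of_real y))"
          unfolding GE_def G_def norm_mult norm_gexp norm_qexp by simp
        also have "\<dots> \<le> exp (- e * (y - y0)^2) * (A * exp (B * y))"
          using bound real_in[OF y, of \<alpha>] al y by (intro mult_left_mono) auto
        also have "\<dots> = A * exp (- e * y^2 + (2 * e * y0 + B) * y + (- e * y0^2))"
          by (simp add: exp_add[symmetric] algebra_simps power2_eq_square)
        also have "\<dots> \<le> A * exp (- e * y^2 + (2 * e * y0 + B) * y)"
          using A e by (intro mult_left_mono) auto
        also have "\<dots> \<le> A * (C * exp (- y))" using A C by (intro mult_left_mono) auto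
        finally show ?thesis by (simp add: mult.assoc)
      qed
    qed
  qed
  have fb: "norm (f (of_real y * c)) \<le> A * exp (B * y)" if "y \<ge> 0" for y
    using bound ray_in[OF al that] that unfolding c_def by (auto simp: ray_norm)
  obtain D where D: "D integrable_on {0..}"
    "\<And>e y. 0 \<le> e \<Longrightarrow> e \<le> e0 \<Longrightarrow> 0 \<le> y \<Longrightarrow> norm (GE e (of_real y * c)) \<le> D y"
    using ray_dom[OF a al A fb[unfolded c_def], of y0] unfolding c_def GE_def G_def e0_def by blast
  have rayint: "(\<lambda>y. GE e (of_real y * c)) absolutely_integrable_on {0..}" if "0 \<le> e" "e \<le> e0" for e
  proof (rule measurable_bounded_by_integrable_imp_absolutely_integrable)
    have "continuous_on {0..} (\<lambda>y. GE e (of_real y * c))"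
      by (rule continuous_on_compose2[OF contGE]) (auto intro!: continuous_intros simp: c_def ray_in[OF al])
    then show "(\<lambda>y. GE e (of_real y * c)) \<in> borel_measurable (lebesgue_on {0..})"
      by (rule continuous_imp_measurable_on_sets_lebesgue) auto
    show "{0::real..} \<in> sets lebesgue" by auto
    show "D integrable_on {0..}" by (rule D)
    show "norm (GE e (of_real y * c)) \<le> D y" if "y \<in> {0..}" for y
      using D(2)[of e y] that \<open>0 \<le> e\<close> \<open>e \<le> e0\<close> by simp
  qed
  have GE0: "GE 0 = G" by (simp add: GE_def fun_eq_iff)
  have rayint0: "(\<lambda>y. G (of_real y * c)) absolutely_integrable_on {0..}"
    using rayint[of 0] e0 by (simp add: GE0)
  have ident: "integral {0..} (\<lambda>y. GE e (of_real y)) = c * integral {0..} (\<lambda>y. GE e (of_real y * c))"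
    if e: "0 < e" "e \<le> e0" for e
  proof -
    have V: "((\<lambda>R. integral {0..R * tan \<alpha>} (\<lambda>t. GE e (of_real R + of_real t * \<i>))) \<longlongrightarrow> 0) at_top"
    proof (rule Lim_null_comparison)
      show "((\<lambda>R. A * exp (B * R - e * (R - y0)^2) / (a * R - 2 * a * y1 - B)) \<longlongrightarrow> 0) at_top"
        using a e by real_asymp
      have ev1: "eventually (\<lambda>R. a * R - 2 * a * y1 - B > 0) at_top" using a by real_asymp
      have ev: "eventually (\<lambda>R. a * R - 2 * a * y1 - B > 0 \<and> R > 0) at_top"
        by (intro eventually_conj ev1 eventually_gt_at_top)
      show "eventually (\<lambda>R. norm (integral {0..R * tan \<alpha>} (\<lambda>t. GE e (of_real R + of_real t * \<i>)))
              \<le> A * exp (B * R - e * (R - y0)^2) / (a * R - 2 * a * y1 - B)) at_top"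
        using ev
      proof eventually_elim
        case (elim R)
        define \<kappa> where "\<kappa> = a * R - 2 * a * y1 - B"
        have k: "\<kappa> > 0" using elim by (simp add: \<kappa>_def)
        have M: "A * exp (B * R - e * (R - y0)^2) \<ge> 0" using A by simp
        show ?case unfolding \<kappa>_def[symmetric]
        proof (rule vert_bound[OF _ k _ M])
          show "continuous_on {0..R * tan \<alpha>} (\<lambda>t. GE e (of_real R + of_real t * \<i>))"
            by (rule continuous_on_compose2[OF contGE]) (auto intro!: continuous_intros vert_in[OF al])
          show "0 \<le> R * tan \<alpha>" using elim tpos by simp
          fix t assume t: "t \<in> {0..R * tan \<alpha>}"
          let ?z = "of_real R + of_real t * \<i> :: complex"
          have t0: "0 \<le> t" and tT: "t \<le> R * tan \<alpha>" using t by auto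
          have nz: "norm ?z \<le> R + t"
            using norm_triangle_ineq[of "of_real R" "of_real t * \<i>"] elim t0 by (simp add: norm_mult)
          have "norm (GE e ?z) = exp (- e * ((R - y0)^2 - t^2)) * (exp (- 2 * a * (R - y1) * t) * norm (f ?z))"
            unfolding GE_def G_def norm_mult norm_gexp norm_qexp by simp
          also have "\<dots> \<le> exp (- e * ((R - y0)^2 - t^2)) * (exp (- 2 * a * (R - y1) * t) * (A * exp (B * (R + t))))"
          proof (intro mult_left_mono)
            have "norm (f ?z) \<le> A * exp (B * norm ?z)" using bound vert_in[OF al t0 tT] by blast
            also have "\<dots> \<le> A * exp (B * (R + t))" using nz A B by (intro mult_left_mono) (auto intro: mult_left_mono)
            finally show "norm (f ?z) \<le> A * exp (B * (R + t))" .
          qed auto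
          also have "\<dots> = A * exp (B * R - e * (R - y0)^2 + (e * t^2 - 2 * a * (R - y1) * t + B * t))"
            by (simp add: exp_add[symmetric] algebra_simps)
          also have "\<dots> \<le> A * exp (B * R - e * (R - y0)^2 + (- \<kappa> * t))"
          proof -
            have "e * t^2 = (e * t) * t" by (simp add: power2_eq_square)
            also have "\<dots> \<le> (e * t) * (R * tan \<alpha>)" using e t0 tT by (intro mult_left_mono) auto
            also have "\<dots> = (e * tan \<alpha>) * (R * t)" by simp
            also have "\<dots> \<le> a * (R * t)" using e0tan[of e] e elim t0 by (intro mult_right_mono) auto
            finally have "e * t^2 \<le> a * (R * t)" .
            then have "e * t^2 - 2 * a * (R - y1) * t + B * t \<le> - \<kappa> * t"
              by (simp add: \<kappa>_def algebra_simps)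
            then show ?thesis using A by (intro mult_left_mono) auto
          qed
          also have "\<dots> = A * exp (B * R - e * (R - y0)^2) * exp (- \<kappa> * t)"
            by (simp only: exp_add mult.assoc)
          finally show "norm (GE e ?z) \<le> A * exp (B * R - e * (R - y0)^2) * exp (- \<kappa> * t)" .
        qed
      qed
    qed
    have l1: "((\<lambda>R. integral {0..R} (\<lambda>x. GE e (of_real x))) \<longlongrightarrow> c * integral {0..} (\<lambda>y. GE e (of_real y * c))) at_top"
      using L_id[OF al holGE rayint[unfolded c_def, OF _ e(2)] V] e unfolding c_def by simp
    have l2: "((\<lambda>R. integral {0..R} (\<lambda>x. GE e (of_real x))) \<longlongrightarrow> integral {0..} (\<lambda>y. GE e (of_real y))) at_top"
      by (rule lim_top[OF realint[OF e(1)]])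
    show ?thesis using tendsto_unique[OF _ l2 l1] by simp
  qed
  have dom: "((\<lambda>e. integral {0..} (\<lambda>y. GE e (of_real y * c))) \<longlongrightarrow> integral {0..} (\<lambda>y. G (of_real y * c))) (at_right 0)"
  proof (rule tendsto_at_right_sequentially[OF e0])
    fix S :: "nat \<Rightarrow> real"
    assume S: "\<And>n. 0 < S n" "\<And>n. S n < e0" "S \<longlonglongrightarrow> 0"
    show "(\<lambda>n. integral {0..} (\<lambda>y. GE (S n) (of_real y * c))) \<longlonglongrightarrow> integral {0..} (\<lambda>y. G (of_real y * c))"
    proof (rule dominated_convergence(2))
      show "(\<lambda>y. GE (S n) (of_real y * c)) integrable_on {0..}" for n
        using rayint[of "S n"] S(1,2)[of n] set_lebesgue_integral_eq_integral(1) by force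
      show "D integrable_on {0..}" by (rule D)
      show "norm (GE (S n) (of_real y * c)) \<le> D y" if "y \<in> {0..}" for n y
        using D(2)[of "S n" y] S(1,2)[of n] that by simp
      show "(\<lambda>n. GE (S n) (of_real y * c)) \<longlonglongrightarrow> G (of_real y * c)" if "y \<in> {0..}" for y
      proof -
        have "(\<lambda>n. exp (- of_real (S n) * (of_real y * c - of_real y0)^2) * G (of_real y * c))
               \<longlonglongrightarrow> exp (- of_real 0 * (of_real y * c - of_real y0)^2) * G (of_real y * c)"
          by (intro tendsto_intros S(3))
        then show ?thesis by (simp add: GE_def)
      qed
    qed
  qed
  have lim: "((\<lambda>e. integral {0..} (\<lambda>y. GE e (of_real y))) \<longlongrightarrow> c * integral {0..} (\<lambda>y. G (of_real y * c))) (at_right 0)"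
  proof (rule Lim_transform_eventually)
    show "((\<lambda>e. c * integral {0..} (\<lambda>y. GE e (of_real y * c))) \<longlongrightarrow> c * integral {0..} (\<lambda>y. G (of_real y * c))) (at_right 0)"
      by (intro tendsto_intros dom)
    show "eventually (\<lambda>e. c * integral {0..} (\<lambda>y. GE e (of_real y * c)) = integral {0..} (\<lambda>y. GE e (of_real y))) (at_right 0)"
      unfolding eventually_at_right_field using e0 ident by (intro exI[of _ e0]) auto
  qed
  show "(\<forall>\<epsilon>>0. (\<lambda>y. complex_of_real (exp (- \<epsilon> * (y - y0)^2)) *
                         exp (\<i> * of_real (a * (y - y1)^2)) * f (of_real y))
                     absolutely_integrable_on {0<..}) \<and>
          (\<lambda>y. exp (\<i> * of_real a * (of_real y * exp (\<i> * of_real \<alpha>) - of_real y1)^2) *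
                f (of_real y * exp (\<i> * of_real \<alpha>))) absolutely_integrable_on {0<..} \<and>
          ((\<lambda>\<epsilon>. integral {0<..} (\<lambda>y. complex_of_real (exp (- \<epsilon> * (y - y0)^2)) *
                         exp (\<i> * of_real (a * (y - y1)^2)) * f (of_real y)))
             \<longlongrightarrow> exp (\<i> * of_real \<alpha>) *
                 integral {0<..} (\<lambda>y. exp (\<i> * of_real a * (of_real y * exp (\<i> * of_real \<alpha>) - of_real y1)^2) *
                   f (of_real y * exp (\<i> * of_real \<alpha>)))) (at_right 0)"
    unfolding realeq c_def[symmetric] rayeq
    using realint abs_Ioi rayint0 lim
    by (simp add: int_Ioi)
qed


theorem corollary2p2:
  fixes a y1 \<alpha> :: real and f :: "complex \<Rightarrow> complex" and \<Omega> :: "complex set"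
  assumes "a > 0" and "0 < \<alpha>" and "\<alpha> < pi / 2"
    and "open \<Omega>" and "sector_plus \<alpha> \<subseteq> \<Omega>" and "f holomorphic_on \<Omega>"
  shows
   "(\<forall>A B. A \<ge> 0 \<longrightarrow> B \<ge> 0 \<longrightarrow>
       (\<forall>z\<in>sector_plus \<alpha>. norm (f z) \<le> A * exp (B * norm z)) \<longrightarrow>
       (\<forall>y0::real.
          (\<forall>\<epsilon>>0. (\<lambda>y. complex_of_real (exp (- \<epsilon> * (y - y0)^2)) *
                         exp (\<i> * of_real (a * (y - y1)^2)) * f (of_real y))
                     absolutely_integrable_on {0<..}) \<and>
          (\<lambda>y. exp (\<i> * of_real a * (of_real y * exp (\<i> * of_real \<alpha>) - of_real y1)^2) *
                f (of_real y * exp (\<i> * of_real \<alpha>))) absolutely_integrable_on {0<..} \<and>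
          ((\<lambda>\<epsilon>. integral {0<..} (\<lambda>y. complex_of_real (exp (- \<epsilon> * (y - y0)^2)) *
                         exp (\<i> * of_real (a * (y - y1)^2)) * f (of_real y)))
             \<longlongrightarrow> exp (\<i> * of_real \<alpha>) *
                 integral {0<..} (\<lambda>y. exp (\<i> * of_real a * (of_real y * exp (\<i> * of_real \<alpha>) - of_real y1)^2) *
                   f (of_real y * exp (\<i> * of_real \<alpha>)))) (at_right 0))) \<and>
    (\<forall>A B. A \<ge> 0 \<longrightarrow> B \<ge> 0 \<longrightarrow>
       (\<forall>z\<in>sector_plus \<alpha>. norm (f z) \<le> A * exp (B * Im z)) \<longrightarrow>
       (\<forall>R>0. (\<lambda>y. exp (\<i> * of_real (a * (y - y1)^2)) * f (of_real y))
                  absolutely_integrable_on {0<..<R}) \<and>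
       (\<lambda>y. exp (\<i> * of_real a * (of_real y * exp (\<i> * of_real \<alpha>) - of_real y1)^2) *
             f (of_real y * exp (\<i> * of_real \<alpha>))) absolutely_integrable_on {0<..} \<and>
       ((\<lambda>R. integral {0<..<R} (\<lambda>y. exp (\<i> * of_real (a * (y - y1)^2)) * f (of_real y)))
          \<longlongrightarrow> exp (\<i> * of_real \<alpha>) *
              integral {0<..} (\<lambda>y. exp (\<i> * of_real a * (of_real y * exp (\<i> * of_real \<alpha>) - of_real y1)^2) *
                f (of_real y * exp (\<i> * of_real \<alpha>)))) at_top)"
  proof -
  have hol: "f holomorphic_on sector_plus \<alpha>"
    using assms(5,6) holomorphic_on_subset by blast
  note P1 = part1[OF assms(1,2,3) hol]
  note P2 = part2[OF assms(1,2,3) hol]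
  show ?thesis using P1 P2 by blast
qed

end
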